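(* Let $n=2k$ with $k\in\mathbb N$, and let $a\in\mathbb R$, $a\neq0$. Then $|T_n(i/a)|\ge \frac12\left(\frac1a+1\right)^n$, where $T_n$ is the Tchebyshev polynomial of the first kind of degree $n$.
   Context: $T_n(x)=\frac12\left((x+\sqrt{x^2-1})^n+(x-\sqrt{x^2-1})^n\right)$, the Tchebyshev polynomial of the first kind of degree $n$. *)

theory Defs imports Complex_Main begin

text \<open>Tchebyshev polynomial of the first kind, defined by the explicit formula
  T_n(x) = ((x + sqrt(x^2-1))^n + (x - sqrt(x^2-1))^n)/2, evaluated at a complex
  argument (the value is independent of the choice of square root).\<close>
definition cheb_T :: "nat \<Rightarrow> complex \<Rightarrow> complex" where
  "cheb_T n x = ((x + csqrt (x^2 - 1))^n + (x - csqrt (x^2 - 1))^n) / 2"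

end

theory Submission imports Defs begin

theorem lemma1:
  fixes k :: nat and a :: real
  assumes "a \<noteq> 0"
  shows "cmod (cheb_T (2 * k) (\<i> / complex_of_real a)) \<ge> (1/2) * (1 / a + 1) ^ (2 * k)"
proof -
  define b where "b = 1 / a"
  define s where "s = sqrt (1 + b^2)"
  have s1: "1 \<le> s" unfolding s_def by simp
  have sb: "\<bar>b\<bar> \<le> s" unfolding s_def by (simp add: real_le_rsqrt)
  have x: "\<i> / complex_of_real a = \<i> * complex_of_real b"
    unfolding b_def by (simp add: divide_complex_def)
  have ss: "s^2 = 1 + b^2" unfolding s_def by simp
  have "(\<i> * complex_of_real s)^2 = (\<i> * complex_of_real b)^2 - 1"
    by (simp add: power_mult_distrib flip: of_real_power) (simp add: ss)
  hence cs: "csqrt ((\<i> * complex_of_real b)^2 - 1) = \<i> * complex_of_real s"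
    by (intro csqrt_unique) (use s1 in auto)
  have p: "(\<i> * complex_of_real c)^(2*k) = complex_of_real ((-1)^k * c^(2*k))" for c
  proof -
    have "(\<i> * complex_of_real c)^(2*k) = ((\<i> * complex_of_real c)^2)^k" by (simp add: power_mult)
    also have "(\<i> * complex_of_real c)^2 = (-1) * complex_of_real (c^2)" by (simp add: power_mult_distrib)
    also have "((-1) * complex_of_real (c^2))^k = (-1)^k * complex_of_real (c^2)^k" by (rule power_mult_distrib)
    finally show ?thesis by (simp add: power_mult)
  qed
  have T: "cheb_T (2*k) (\<i> / complex_of_real a)
      = complex_of_real ((-1)^k * (((b+s)^(2*k) + (b-s)^(2*k)) / 2))"
  proof -
    have e1: "\<i> * complex_of_real b + \<i> * complex_of_real s = \<i> * complex_of_real (b+s)" by (simp add: algebra_simps)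
    have e2: "\<i> * complex_of_real b - \<i> * complex_of_real s = \<i> * complex_of_real (b-s)" by (simp add: algebra_simps)
    show ?thesis unfolding cheb_T_def x cs e1 e2 p by (simp add: algebra_simps)
  qed
  have nn: "0 \<le> (b+s)^(2*k)" "0 \<le> (b-s)^(2*k)"
    by (simp_all add: power_mult)
  have "(1/a + 1)^(2*k) = \<bar>b + 1\<bar>^(2*k)"
    unfolding b_def by (simp add: power_mult)
  also have "\<dots> \<le> (\<bar>b\<bar> + s)^(2*k)"
    by (rule power_mono) (use s1 in auto)
  also have "\<dots> \<le> (b+s)^(2*k) + (b-s)^(2*k)"
  proof (cases "b \<ge> 0")
    case True thus ?thesis using nn by simp
  next
    case False
    hence "(\<bar>b\<bar> + s)^(2*k) = (b-s)^(2*k)"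
      by (simp add: power_mult) (simp add: power2_eq_square algebra_simps)
    thus ?thesis using nn by simp
  qed
  finally have F: "(1/a + 1)^(2*k) \<le> (b+s)^(2*k) + (b-s)^(2*k)" .
  have "cmod (cheb_T (2*k) (\<i> / complex_of_real a)) = \<bar>(-1)^k * (((b+s)^(2*k) + (b-s)^(2*k)) / 2)\<bar>"
    unfolding T by (rule norm_of_real)
  also have "\<dots> = ((b+s)^(2*k) + (b-s)^(2*k)) / 2"
    using nn by (simp add: abs_mult power_abs)
  finally show ?thesis using F by simp
qed

end
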